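(* Let $(H,k,\chi)$ be an instance of Precoloring Extension with $H=(\{1,\dots,n\},F)$ having at least one edge and $\chi:V_0\to\{1,\dots,k\}$. Let $X=nk+1$; let $u_j=\chi(j)$, $\ell_j=\chi(j)$ for $j\in V_0$ and $u_j=k$, $\ell_j=1$ for $j\notin V_0$. Construct a $P_n\,|\,\mathrm{conc}\,|\,\sum C_j$ instance: jobs $1,\dots,n$ with $p_j=1$ and conflict graph initially $H$; for each $j\in\{1,\dots,n\}$, jobs $j(1),\dots,j(X)$ with processing time $X-u_j$, each in conflict with $j$, and for each $i\in\{1,\dots,X\}$ jobs $j(i,1),\dots,j(i,X)$ with processing time $u_j$, each in conflict with $j(i)$; for each $j\in V_0$ with $\chi(j)>1$, jobs $j^*(1),\dots,j^*(X)$ with processing time $\ell_j-1$, each in conflict with $j$ only. Let $K=\sum_{j=1}^n\big[(1+u_j)X^2+(\ell_j-1)X\big]+nk$. If the constructed instance has a minimal feasible schedule $C$ with $\sum_j C_j\le K$, then $(H,k,\chi)$ has a solution $\chi':\{1,\dots,n\}\to\{1,\dots,k\}$.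
   Context: Precoloring Extension: given a graph $H=(V,F)$, an integer $k$, and a proper coloring $\chi:V_0\to\{1,\dots,k\}$ of $H[V_0]$ for some $V_0\subseteq V$, a solution is a proper coloring $\chi':V\to\{1,\dots,k\}$ of $H$ with $\chi'(v)=\chi(v)$ for all $v\in V_0$. In $P_n\,|\,\mathrm{conc}\,|\,\sum C_j$, each job $j$ has integer processing time $p_j\ge1$ and release time $0$, and there is a conflict graph $G$ (the edges listed); a schedule assigning completion times $C_j\in\mathbb{N}$ is feasible if $C_j-p_j\ge0$ for all $j$ and $[C_i-p_i,C_i)\cap[C_j-p_j,C_j)=\emptyset$ for all conflicting pairs $\{i,j\}$; $\sum_j C_j$ is over all jobs. A feasible schedule is minimal if decreasing the completion time of any job by any positive amount makes it infeasible. *)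

theory Defs
  imports Main
begin

definition simple_graph :: "'a set \<Rightarrow> 'a set set \<Rightarrow> bool" where
  "simple_graph V F \<longleftrightarrow> (\<forall>e\<in>F. \<exists>a b. e = {a, b} \<and> a \<noteq> b \<and> a \<in> V \<and> b \<in> V)"

definition proper_coloring :: "'a set \<Rightarrow> 'a set set \<Rightarrow> nat \<Rightarrow> ('a \<Rightarrow> nat) \<Rightarrow> bool" where
  "proper_coloring V F k c \<longleftrightarrow>
     (\<forall>v\<in>V. c v \<in> {1..k}) \<and> (\<forall>a\<in>V. \<forall>b\<in>V. {a, b} \<in> F \<longrightarrow> c a \<noteq> c b)"

definition prext_instance :: "'a set \<Rightarrow> 'a set set \<Rightarrow> nat \<Rightarrow> 'a set \<Rightarrow> ('a \<Rightarrow> nat) \<Rightarrow> bool" where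
  "prext_instance V F k V0 chi \<longleftrightarrow>
     simple_graph V F \<and> V0 \<subseteq> V \<and> proper_coloring V0 {e\<in>F. e \<subseteq> V0} k chi"

definition prext_solution :: "'a set \<Rightarrow> 'a set set \<Rightarrow> nat \<Rightarrow> 'a set \<Rightarrow> ('a \<Rightarrow> nat) \<Rightarrow> ('a \<Rightarrow> nat) \<Rightarrow> bool" where
  "prext_solution V F k V0 chi chi' \<longleftrightarrow>
     proper_coloring V F k chi' \<and> (\<forall>v\<in>V0. chi' v = chi v)"

definition conc_feasible :: "'j set \<Rightarrow> ('j \<Rightarrow> nat) \<Rightarrow> 'j set set \<Rightarrow> ('j \<Rightarrow> nat) \<Rightarrow> bool" where
  "conc_feasible J p E C \<longleftrightarrow>
     (\<forall>j\<in>J. p j \<le> C j) \<and>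
     (\<forall>i\<in>J. \<forall>j\<in>J. {i, j} \<in> E \<longrightarrow> i \<noteq> j \<longrightarrow>
        {C i - p i ..< C i} \<inter> {C j - p j ..< C j} = {})"

definition conc_minimal :: "'j set \<Rightarrow> ('j \<Rightarrow> nat) \<Rightarrow> 'j set set \<Rightarrow> ('j \<Rightarrow> nat) \<Rightarrow> bool" where
  "conc_minimal J p E C \<longleftrightarrow>
     conc_feasible J p E C \<and> (\<forall>j\<in>J. \<forall>c < C j. \<not> conc_feasible J p E (C(j := c)))"

text \<open>Base j = job j; Aux j i = j(i); Leaf j i m = j(i,m); Star j i = j*(i).\<close>
datatype job = Base nat | Aux nat nat | Leaf nat nat nat | Star nat nat

definition redX :: "nat \<Rightarrow> nat \<Rightarrow> nat" where
  "redX n k = n * k + 1"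

definition red_u :: "nat \<Rightarrow> nat set \<Rightarrow> (nat \<Rightarrow> nat) \<Rightarrow> nat \<Rightarrow> nat" where
  "red_u k V0 chi j = (if j \<in> V0 then chi j else k)"

definition red_l :: "nat set \<Rightarrow> (nat \<Rightarrow> nat) \<Rightarrow> nat \<Rightarrow> nat" where
  "red_l V0 chi j = (if j \<in> V0 then chi j else 1)"

definition red_jobs :: "nat \<Rightarrow> nat \<Rightarrow> nat set \<Rightarrow> (nat \<Rightarrow> nat) \<Rightarrow> job set" where
  "red_jobs n k V0 chi =
     {Base j | j. j \<in> {1..n}}
   \<union> {Aux j i | j i. j \<in> {1..n} \<and> i \<in> {1..redX n k}}
   \<union> {Leaf j i m | j i m. j \<in> {1..n} \<and> i \<in> {1..redX n k} \<and> m \<in> {1..redX n k}}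
   \<union> {Star j i | j i. j \<in> V0 \<and> chi j > 1 \<and> i \<in> {1..redX n k}}"

fun red_p :: "nat \<Rightarrow> nat \<Rightarrow> nat set \<Rightarrow> (nat \<Rightarrow> nat) \<Rightarrow> job \<Rightarrow> nat" where
  "red_p n k V0 chi (Base j) = 1"
| "red_p n k V0 chi (Aux j i) = redX n k - red_u k V0 chi j"
| "red_p n k V0 chi (Leaf j i m) = red_u k V0 chi j"
| "red_p n k V0 chi (Star j i) = red_l V0 chi j - 1"

definition red_E :: "nat set set \<Rightarrow> job set set" where
  "red_E F =
     {{Base a, Base b} | a b. {a, b} \<in> F}
   \<union> {{Base j, Aux j i} | j i. True}
   \<union> {{Aux j i, Leaf j i m} | j i m. True}
   \<union> {{Base j, Star j i} | j i. True}"

definition red_K :: "nat \<Rightarrow> nat \<Rightarrow> nat set \<Rightarrow> (nat \<Rightarrow> nat) \<Rightarrow> nat" where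
  "red_K n k V0 chi =
     (\<Sum>j = 1..n. (1 + red_u k V0 chi j) * (redX n k)^2 + (red_l V0 chi j - 1) * redX n k) + n * k"

end

theory Submission
  imports Defs
begin

lemma group_bound:
  fixes X u a t :: nat and Cm :: "nat \<Rightarrow> nat"
  assumes X2u: "2*u < X" and ap: "X - u \<le> a" and lo: "\<forall>m\<in>{1..X}. u \<le> Cm m"
   and dj: "\<forall>m\<in>{1..X}. {Cm m - u..<Cm m} \<inter> {a - (X-u)..<a} = {}"
  shows "X*(1+u) \<le> a + (\<Sum>m=1..X. Cm m) \<and>
     (u \<le> t \<and> t < X \<and> t \<notin> {a-(X-u)..<a} \<longrightarrow> X*(1+u) < a + (\<Sum>m=1..X. Cm m))"
proof -
  define s where "s = a - (X - u)"
  have as: "a = s + (X - u)" using ap s_def by simp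
  have sumlo: "X*u \<le> (\<Sum>m=1..X. Cm m)"
  proof -
    have "(\<Sum>m=1..X. u) \<le> (\<Sum>m=1..X. Cm m)" by (rule sum_mono) (use lo in auto)
    then show ?thesis by (simp add: mult.commute)
  qed
  show ?thesis
  proof (cases "\<forall>m\<in>{1..X}. Cm m \<le> s")
    case True
    have "1 \<in> {1..X}" using X2u by simp
    then have "u \<le> s" using True lo by force
    then have aX: "X \<le> a" using as by simp
    have strict: "X < a" if "u \<le> t" "t < X" "t \<notin> {a-(X-u)..<a}"
    proof (rule ccontr)
      assume "\<not> X < a"
      then have "a = X" using aX by simp
      then have "s = u" using as X2u by simp
      then show False using that \<open>a = X\<close> s_def by auto
    qed
    show ?thesis using aX strict sumlo by (auto simp: algebra_simps)
  next
    case False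
    then obtain m0 where m0: "m0 \<in> {1..X}" "s < Cm m0" by (auto simp: not_le)
    show ?thesis
    proof (cases "u = 0")
      case True
      then have aX: "X \<le> a" using ap by simp
      have strict: "X < a" if "u \<le> t" "t < X" "t \<notin> {a-(X-u)..<a}"
      proof (rule ccontr)
        assume "\<not> X < a"
        then have "a = X" using aX by simp
        then show False using that True by auto
      qed
      show ?thesis using aX strict sumlo True by auto
    next
      case False
      have big: "a + u \<le> Cm m0"
      proof (rule ccontr)
        assume "\<not> a + u \<le> Cm m0"
        define z where "z = max s (Cm m0 - u)"
        have "z \<in> {Cm m0 - u..<Cm m0}" using m0 False lo z_def by auto
        moreover have "z \<in> {a - (X-u)..<a}"
        proof -
          have "s < a" using as X2u by simp
          moreover have "Cm m0 - u < a" using \<open>\<not> a + u \<le> Cm m0\<close> ap X2u by arith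
          ultimately show ?thesis unfolding s_def[symmetric] z_def by (simp add: max_def)
        qed
        ultimately show False using dj m0 by blast
      qed
      have "(\<Sum>m=1..X. Cm m) = Cm m0 + (\<Sum>m\<in>{1..X}-{m0}. Cm m)"
        using m0 by (simp add: sum.remove)
      moreover have "(\<Sum>m\<in>{1..X}-{m0}. u) \<le> (\<Sum>m\<in>{1..X}-{m0}. Cm m)"
        by (rule sum_mono) (use lo in auto)
      moreover have "(\<Sum>m\<in>{1..X}-{m0}. u) = (X - 1) * u" using m0 by simp
      moreover have "(X - 1) * u + u = X * u" using X2u
        by (metis Suc_diff_1 add.commute bot_nat_0.not_eq_extremum less_nat_zero_code mult_Suc)
      ultimately have "2*a + X*u \<le> a + (\<Sum>m=1..X. Cm m)" using big by linarith
      moreover have "X*(1+u) < 2*a + X*u" using ap X2u by (simp add: algebra_simps)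
      ultimately show ?thesis by linarith
    qed
  qed
qed

lemma star_bound:
  fixes X q c :: nat and Cs :: "nat \<Rightarrow> nat"
  assumes lo: "\<forall>i\<in>{1..X}. q \<le> Cs i"
    and dj: "\<forall>i\<in>{1..X}. {Cs i - q..<Cs i} \<inter> {c - 1..<c} = {}"
    and c: "1 \<le> c" "c \<le> q"
  shows "X * q + X \<le> (\<Sum>i=1..X. Cs i)"
proof -
  have "\<forall>i\<in>{1..X}. q + 1 \<le> Cs i"
  proof
    fix i assume i: "i \<in> {1..X}"
    show "q + 1 \<le> Cs i"
    proof (rule ccontr)
      assume "\<not> q + 1 \<le> Cs i"
      then have "Cs i = q" using lo i by force
      then have "c - 1 \<in> {Cs i - q..<Cs i} \<inter> {c - 1..<c}" using c by auto
      then show False using dj i by blast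
    qed
  qed
  then have "(\<Sum>i=1..X. q + 1) \<le> (\<Sum>i=1..X. Cs i)" by (intro sum_mono) auto
  then show ?thesis by (simp add: algebra_simps)
qed


theorem lemma14:
  fixes n k :: nat and F :: "nat set set" and V0 :: "nat set" and chi :: "nat \<Rightarrow> nat"
    and C :: "job \<Rightarrow> nat"
  assumes inst: "prext_instance {1..n} F k V0 chi"
    and edge: "F \<noteq> {}"
    and minC: "conc_minimal (red_jobs n k V0 chi) (red_p n k V0 chi) (red_E F) C"
    and sumC: "(\<Sum>j\<in>red_jobs n k V0 chi. C j) \<le> red_K n k V0 chi"
  shows "\<exists>chi'. prext_solution {1..n} F k V0 chi chi'"
proof -
  define X where "X = redX n k"
  define u where "u = red_u k V0 chi"
  define l where "l = red_l V0 chi"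
  define J where "J = red_jobs n k V0 chi"
  define p where "p = red_p n k V0 chi"
  define I where "I = {1..X}"
  define V1 where "V1 = {j\<in>V0. chi j > 1}"
  have sg: "simple_graph {1..n} F" and V0n: "V0 \<subseteq> {1..n}"
    and chiR: "\<forall>v\<in>V0. chi v \<in> {1..k}"
    using inst by (auto simp: prext_instance_def proper_coloring_def)
  obtain e where "e \<in> F" using edge by auto
  then obtain a b where "a \<noteq> b" "a \<in> {1..n}" "b \<in> {1..n}" using sg by (auto simp: simple_graph_def)
  then have n2: "2 \<le> n" by auto
  have Xdef: "X = n*k+1" by (simp add: X_def redX_def)
  have "2*k \<le> n*k" using n2 by simp
  then have k2X: "2*k < X" using Xdef by linarith
  have u_le: "u j \<le> k" for j using chiR by (auto simp: u_def red_u_def)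
  have u2: "2 * u j < X" for j using u_le[of j] k2X by linarith
  have l_ge: "1 \<le> l j" for j using chiR by (auto simp: l_def red_l_def)
  have lu: "j \<in> V0 \<Longrightarrow> l j = u j" for j by (simp add: l_def u_def red_l_def red_u_def)
  have lV1: "j \<notin> V1 \<Longrightarrow> l j = 1" for j using chiR by (auto simp: l_def red_l_def V1_def)
  have feas: "conc_feasible J p (red_E F) C" using minC by (simp add: conc_minimal_def J_def p_def)
  then have pC: "\<And>x. x \<in> J \<Longrightarrow> p x \<le> C x"
    and dj: "\<And>x y. x \<in> J \<Longrightarrow> y \<in> J \<Longrightarrow> {x, y} \<in> red_E F \<Longrightarrow> x \<noteq> y \<Longrightarrow>
        {C x - p x ..< C x} \<inter> {C y - p y ..< C y} = {}"
    by (auto simp: conc_feasible_def)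
  have inB: "j \<in> {1..n} \<Longrightarrow> Base j \<in> J" for j by (auto simp: J_def red_jobs_def)
  have inA: "j \<in> {1..n} \<Longrightarrow> i \<in> I \<Longrightarrow> Aux j i \<in> J" for j i
    by (auto simp: J_def red_jobs_def I_def X_def)
  have inL: "j \<in> {1..n} \<Longrightarrow> i \<in> I \<Longrightarrow> m \<in> I \<Longrightarrow> Leaf j i m \<in> J" for j i m
    by (auto simp: J_def red_jobs_def I_def X_def)
  have inS: "j \<in> V1 \<Longrightarrow> i \<in> I \<Longrightarrow> Star j i \<in> J" for j i
    by (auto simp: J_def red_jobs_def I_def X_def V1_def)
  have eBB: "{a, b} \<in> F \<Longrightarrow> {Base a, Base b} \<in> red_E F" for a b by (auto simp: red_E_def)
  have eBA: "{Base j, Aux j i} \<in> red_E F" for j i by (auto simp: red_E_def)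
  have eAL: "{Aux j i, Leaf j i m} \<in> red_E F" for j i m by (auto simp: red_E_def)
  have eSB: "{Star j i, Base j} \<in> red_E F" for j i by (auto simp: red_E_def insert_commute)
  have pB: "p (Base j) = 1" for j by (simp add: p_def)
  have pA: "p (Aux j i) = X - u j" for j i by (simp add: p_def X_def u_def)
  have pL: "p (Leaf j i m) = u j" for j i m by (simp add: p_def u_def)
  have pS: "p (Star j i) = l j - 1" for j i by (simp add: p_def l_def)

  define G where "G j i = C (Aux j i) + (\<Sum>m\<in>I. C (Leaf j i m))" for j i
  define T where "T j = C (Base j) + (\<Sum>i\<in>I. G j i) + (if j \<in> V1 then \<Sum>i\<in>I. C (Star j i) else 0)" for j
  define bs where "bs j = (1 + u j) * X^2 + (l j - 1) * X" for j

  have Gb: "X*(1+u j) \<le> G j i \<and> (u j \<le> C (Base j) - 1 \<and> C (Base j) - 1 < X \<longrightarrow> X*(1+u j) < G j i)"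
    if j: "j \<in> {1..n}" and i: "i \<in> I" for j i
  proof -
    have A: "Aux j i \<in> J" using inA j i .
    have B: "Base j \<in> J" using inB j .
    have cb: "1 \<le> C (Base j)" using pC[OF B] pB by simp
    have "{C (Aux j i) - (X - u j)..<C (Aux j i)} \<inter> {C (Base j) - 1..<C (Base j)} = {}"
      using dj[OF A B] eBA[of j i] pA pB by (simp add: insert_commute)
    then have nt: "C (Base j) - 1 \<notin> {C (Aux j i) - (X - u j)..<C (Aux j i)}" using cb by auto
    have ap: "X - u j \<le> C (Aux j i)" using pC[OF A] pA by simp
    have lo: "\<forall>m\<in>{1..X}. u j \<le> C (Leaf j i m)" using pC inL[OF j i] pL by (metis I_def)
    have djm: "\<forall>m\<in>{1..X}. {C (Leaf j i m) - u j..<C (Leaf j i m)} \<inter> {C (Aux j i) - (X - u j)..<C (Aux j i)} = {}"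
    proof
      fix m assume m: "m \<in> {1..X}"
      have Lm: "Leaf j i m \<in> J" using inL[OF j i] m by (simp add: I_def)
      show "{C (Leaf j i m) - u j..<C (Leaf j i m)} \<inter> {C (Aux j i) - (X - u j)..<C (Aux j i)} = {}"
        using dj[OF Lm A] eAL[of j i m] pA pL by (simp add: insert_commute)
    qed
    from group_bound[OF u2 ap lo djm, of "C (Base j) - 1"] nt
    show ?thesis unfolding G_def I_def by auto
  qed

  have Sb: "X * (l j - 1) \<le> (if j \<in> V1 then \<Sum>i\<in>I. C (Star j i) else 0)
     \<and> (C (Base j) < l j \<longrightarrow> X * (l j - 1) + X \<le> (if j \<in> V1 then \<Sum>i\<in>I. C (Star j i) else 0))"
    if j: "j \<in> {1..n}" for j
  proof (cases "j \<in> V1")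
    case False
    then show ?thesis using lV1[OF False] pC[OF inB[OF j]] pB by auto
  next
    case True
    have B: "Base j \<in> J" using inB j .
    have cb: "1 \<le> C (Base j)" using pC[OF B] pB by simp
    have lo: "\<forall>i\<in>{1..X}. l j - 1 \<le> C (Star j i)" using pC inS[OF True] pS by (metis I_def)
    have djs: "\<forall>i\<in>{1..X}. {C (Star j i) - (l j - 1)..<C (Star j i)} \<inter> {C (Base j) - 1..<C (Base j)} = {}"
    proof
      fix i assume i: "i \<in> {1..X}"
      have S: "Star j i \<in> J" using inS[OF True] i by (simp add: I_def)
      show "{C (Star j i) - (l j - 1)..<C (Star j i)} \<inter> {C (Base j) - 1..<C (Base j)} = {}"
        using dj[OF S B] eSB[of j i] pS pB by simp
    qed
    have "(\<Sum>i\<in>I. l j - 1) \<le> (\<Sum>i\<in>I. C (Star j i))" using lo by (intro sum_mono) (auto simp: I_def)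
    then have 1: "X * (l j - 1) \<le> (\<Sum>i\<in>I. C (Star j i))" by (simp add: I_def)
    have 2: "C (Base j) < l j \<Longrightarrow> X * (l j - 1) + X \<le> (\<Sum>i\<in>I. C (Star j i))"
      using star_bound[OF lo djs cb] unfolding I_def by simp
    show ?thesis using 1 2 True by simp
  qed

  have Tlow: "bs j \<le> T j" and Tbad: "\<not> (1 \<le> C (Base j) \<and> C (Base j) \<le> u j \<and> l j \<le> C (Base j)) \<Longrightarrow> bs j + X \<le> T j"
    if j: "j \<in> {1..n}" for j
  proof -
    have cb: "1 \<le> C (Base j)" using pC[OF inB[OF j]] pB by simp
    have "(\<Sum>i\<in>I. X*(1+u j)) \<le> (\<Sum>i\<in>I. G j i)" using Gb[OF j] by (intro sum_mono) auto
    then have g1: "(1 + u j) * X^2 \<le> (\<Sum>i\<in>I. G j i)" by (simp add: I_def power2_eq_square algebra_simps)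
    have s1: "X * (l j - 1) \<le> (if j \<in> V1 then \<Sum>i\<in>I. C (Star j i) else 0)" using Sb[OF j] by simp
    show "bs j \<le> T j" using g1 s1 unfolding bs_def T_def by (simp add: mult.commute)
    assume bad: "\<not> (1 \<le> C (Base j) \<and> C (Base j) \<le> u j \<and> l j \<le> C (Base j))"
    show "bs j + X \<le> T j"
    proof (cases "C (Base j) < l j")
      case True
      have "X * (l j - 1) + X \<le> (if j \<in> V1 then \<Sum>i\<in>I. C (Star j i) else 0)" using Sb[OF j] True by simp
      then show ?thesis using g1 unfolding bs_def T_def by (simp add: mult.commute)
    next
      case False
      then have cu: "u j < C (Base j)" using bad cb by auto
      show ?thesis
      proof (cases "X < C (Base j)")
        case True
        then show ?thesis using g1 s1 unfolding bs_def T_def by (simp add: mult.commute)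
      next
        case False
        have "(\<Sum>i\<in>I. X*(1+u j) + 1) \<le> (\<Sum>i\<in>I. G j i)"
        proof (intro sum_mono)
          fix i assume "i \<in> I"
          moreover have "u j \<le> C (Base j) - 1 \<and> C (Base j) - 1 < X" using cu False cb by linarith
          ultimately show "X*(1+u j) + 1 \<le> G j i" using Gb[OF j] by (simp add: Suc_le_eq)
        qed
        then have "(1 + u j) * X^2 + X \<le> (\<Sum>i\<in>I. G j i)" by (simp add: I_def power2_eq_square algebra_simps)
        then show ?thesis using s1 unfolding bs_def T_def by (simp add: mult.commute)
      qed
    qed
  qed

  have sumJ: "(\<Sum>x\<in>J. C x) = (\<Sum>j=1..n. T j)"
  proof -
    define N where "N = {1..n::nat}"
    define SA where "SA = (\<lambda>(j,i). Aux j i) ` (N \<times> I)"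
    define SL where "SL = (\<lambda>(j,i,m). Leaf j i m) ` (N \<times> I \<times> I)"
    define SS where "SS = (\<lambda>(j,i). Star j i) ` (V1 \<times> I)"
    have V1N: "V1 \<subseteq> N" using V0n by (auto simp: V1_def N_def)
    have fin: "finite N" "finite I" "finite V1" using V1N by (auto simp: N_def I_def intro: finite_subset)
    have Jeq: "J = ((Base ` N \<union> SA) \<union> SL) \<union> SS"
      unfolding J_def red_jobs_def SA_def SL_def SS_def N_def I_def V1_def X_def
      by (auto simp: image_iff)
    have "(\<Sum>x\<in>J. C x) = (\<Sum>x\<in>Base ` N. C x) + (\<Sum>x\<in>SA. C x) + (\<Sum>x\<in>SL. C x) + (\<Sum>x\<in>SS. C x)"
      unfolding Jeq using fin
      by (subst sum.union_disjoint; (auto simp: SA_def SL_def SS_def)?)+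
    also have "(\<Sum>x\<in>Base ` N. C x) = (\<Sum>j\<in>N. C (Base j))"
      by (subst sum.reindex) (auto simp: inj_on_def)
    also have "(\<Sum>x\<in>SA. C x) = (\<Sum>j\<in>N. \<Sum>i\<in>I. C (Aux j i))"
      unfolding SA_def
      by (subst sum.reindex) (auto simp: inj_on_def sum.cartesian_product split_beta)
    also have "(\<Sum>x\<in>SL. C x) = (\<Sum>j\<in>N. \<Sum>i\<in>I. \<Sum>m\<in>I. C (Leaf j i m))"
      unfolding SL_def
      by (subst sum.reindex) (auto simp: inj_on_def sum.cartesian_product split_beta)
    also have "(\<Sum>x\<in>SS. C x) = (\<Sum>j\<in>V1. \<Sum>i\<in>I. C (Star j i))"
      unfolding SS_def
      by (subst sum.reindex) (auto simp: inj_on_def sum.cartesian_product split_beta)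
    also have "(\<Sum>j\<in>V1. \<Sum>i\<in>I. C (Star j i)) = (\<Sum>j\<in>N. if j \<in> V1 then \<Sum>i\<in>I. C (Star j i) else 0)"
      using fin V1N by (simp add: sum.If_cases Int_absorb1 Int_commute)
    finally show ?thesis
      unfolding T_def G_def N_def by (simp add: sum.distrib)
  qed

  have good: "1 \<le> C (Base j) \<and> C (Base j) \<le> u j \<and> l j \<le> C (Base j)" if j: "j \<in> {1..n}" for j
  proof (rule ccontr)
    assume bad: "\<not> ?thesis"
    have "(\<Sum>j=1..n. T j) = T j + (\<Sum>j\<in>{1..n}-{j}. T j)" using j by (simp add: sum.remove)
    moreover have "(\<Sum>j=1..n. bs j) = bs j + (\<Sum>j\<in>{1..n}-{j}. bs j)" using j by (simp add: sum.remove)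
    moreover have "(\<Sum>j\<in>{1..n}-{j}. bs j) \<le> (\<Sum>j\<in>{1..n}-{j}. T j)" using Tlow by (intro sum_mono) auto
    moreover have "bs j + X \<le> T j" using Tbad[OF j bad] .
    moreover have "red_K n k V0 chi = (\<Sum>j=1..n. bs j) + n * k"
      by (simp add: red_K_def bs_def u_def l_def X_def)
    ultimately have "(\<Sum>j=1..n. bs j) + X \<le> (\<Sum>j=1..n. T j)" by linarith
    moreover have "(\<Sum>j=1..n. T j) \<le> red_K n k V0 chi" using sumC sumJ by (simp add: J_def)
    ultimately show False using Xdef \<open>red_K n k V0 chi = (\<Sum>j=1..n. bs j) + n * k\<close> by linarith
  qed

  define chi' where "chi' j = C (Base j)" for j
  have "prext_solution {1..n} F k V0 chi chi'"
    unfolding prext_solution_def proper_coloring_def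
  proof (intro conjI ballI impI)
    fix v assume v: "v \<in> {1..n}"
    show "chi' v \<in> {1..k}" using good[OF v] u_le[of v] by (auto simp: chi'_def)
  next
    fix x y assume x: "x \<in> {1..n}" and y: "y \<in> {1..n}" and e: "{x, y} \<in> F"
    have "x \<noteq> y" using sg e by (auto simp: simple_graph_def doubleton_eq_iff)
    then have "Base x \<noteq> Base y" by simp
    from dj[OF inB[OF x] inB[OF y] eBB[OF e] this] pB good[OF x] good[OF y]
    show "chi' x \<noteq> chi' y" by (auto simp: chi'_def)
  next
    fix v assume v: "v \<in> V0"
    then have vn: "v \<in> {1..n}" using V0n by auto
    have "l v = chi v" "u v = chi v" using v by (auto simp: l_def u_def red_l_def red_u_def)
    then show "chi' v = chi v" using good[OF vn] by (simp add: chi'_def)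
  qed
  then show ?thesis by blast
qed

end
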